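(* Let $L\subseteq B_i$ be an SINR-feasible set of links contained in a single bucket $B_i$. Then there is a constant $C$ depending only on $\alpha,\beta,\varepsilon$ such that for every $e\in B_i$, \[\sum_{\{e'\in L: d_{e'}\ge d_e\}}\bar a_{e'}(e)\;\le\;\bar a_L(e)+\bar a_e(e)\;\le\;C.\]
   Context: Constants: $\alpha\ge0$, $N>0$, $\beta>0$. Nodes lie in the Euclidean plane. A link is $e=(s_e,r_e,P_e)$ with transmitter, receiver, power $P_e>0$; $\mathcal{L}$ is the set of links. $d_e=d(s_e,r_e)$, $d_{e'e}=d(s_{e'},r_e)$, $S_e=P_e/d_e^\alpha$, $S_{e'e}=P_{e'}/d_{e'e}^\alpha$, $\gamma_e=\beta S_e/(S_e-\beta N)$. Affectances: $\hat a_{e'}(e)=S_{e'e}/S_e$, $a_{e'}(e)=\gamma_e\hat a_{e'}(e)$, $\bar a_{e'}(e)=\min\{1,a_{e'}(e)\}$, and $\bar a_L(e)=\sum_{e'\in L\setminus\{e\}}\bar a_{e'}(e)$. $L$ is SINR-feasible if $S_e/(N+\sum_{e'\in L\setminus\{e\}}S_{e'e})\ge\beta$ for all $e\in L$ (equivalently $\sum_{e'\in L\setminus\{e\}}a_{e'}(e)\le1$). Buckets: $S_{\min}=\min_{e\in\mathcal{L}}S_e$, $B_i=\{e\in\mathcal{L}:2^iS_{\min}\le S_e<2^{i+1}S_{\min}\}$. Standing assumption: there is a constant $\varepsilon>0$ with $S_e/N\ge(1+\varepsilon)\beta$ for all $e\in\mathcal{L}$. *)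

theory Defs
  imports "HOL-Analysis.Analysis"
begin

type_synonym point = "real^2"
type_synonym link = "point \<times> point \<times> real"

definition sender :: "link \<Rightarrow> point" where "sender e = fst e"
definition receiver :: "link \<Rightarrow> point" where "receiver e = fst (snd e)"
definition power :: "link \<Rightarrow> real" where "power e = snd (snd e)"

definition dlen :: "link \<Rightarrow> real" where "dlen e = dist (sender e) (receiver e)"
definition dcross :: "link \<Rightarrow> link \<Rightarrow> real" where
  "dcross e' e = dist (sender e') (receiver e)"

definition sig :: "real \<Rightarrow> link \<Rightarrow> real" where
  "sig \<alpha> e = power e / (dlen e powr \<alpha>)"
definition sigx :: "real \<Rightarrow> link \<Rightarrow> link \<Rightarrow> real" where
  "sigx \<alpha> e' e = power e' / (dcross e' e powr \<alpha>)"

definition gam :: "real \<Rightarrow> real \<Rightarrow> real \<Rightarrow> link \<Rightarrow> real" where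
  "gam \<alpha> \<beta> N e = \<beta> * sig \<alpha> e / (sig \<alpha> e - \<beta> * N)"

definition aff_hat :: "real \<Rightarrow> link \<Rightarrow> link \<Rightarrow> real" where
  "aff_hat \<alpha> e' e = sigx \<alpha> e' e / sig \<alpha> e"
definition aff :: "real \<Rightarrow> real \<Rightarrow> real \<Rightarrow> link \<Rightarrow> link \<Rightarrow> real" where
  "aff \<alpha> \<beta> N e' e = gam \<alpha> \<beta> N e * aff_hat \<alpha> e' e"
definition aff_bar :: "real \<Rightarrow> real \<Rightarrow> real \<Rightarrow> link \<Rightarrow> link \<Rightarrow> real" where
  "aff_bar \<alpha> \<beta> N e' e = min 1 (aff \<alpha> \<beta> N e' e)"
definition aff_bar_set :: "real \<Rightarrow> real \<Rightarrow> real \<Rightarrow> link set \<Rightarrow> link \<Rightarrow> real" where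
  "aff_bar_set \<alpha> \<beta> N L e = (\<Sum>e'\<in>L - {e}. aff_bar \<alpha> \<beta> N e' e)"

definition sinr_feasible :: "real \<Rightarrow> real \<Rightarrow> real \<Rightarrow> link set \<Rightarrow> bool" where
  "sinr_feasible \<alpha> \<beta> N L \<longleftrightarrow>
     (\<forall>e\<in>L. sig \<alpha> e / (N + (\<Sum>e'\<in>L - {e}. sigx \<alpha> e' e)) \<ge> \<beta>)"

definition Smin :: "real \<Rightarrow> link set \<Rightarrow> real" where
  "Smin \<alpha> Ls = Min (sig \<alpha> ` Ls)"
definition bucket :: "real \<Rightarrow> link set \<Rightarrow> nat \<Rightarrow> link set" where
  "bucket \<alpha> Ls i = {e\<in>Ls. 2^i * Smin \<alpha> Ls \<le> sig \<alpha> e \<and> sig \<alpha> e < 2^(i+1) * Smin \<alpha> Ls}"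

end

theory Submission
  imports Defs
begin

lemma sig_pos:
  assumes "power e > 0" "sender e \<noteq> receiver e"
  shows "sig a e > 0"
proof -
  have "dlen e > 0" using assms(2) unfolding dlen_def by simp
  then show ?thesis using assms(1) unfolding sig_def by simp
qed

lemma sigx_nonneg:
  assumes "power e' > 0"
  shows "sigx a e' e \<ge> 0"
  using assms unfolding sigx_def by simp

lemma gam_bounds:
  assumes "sig a e / N \<ge> (1+eps) * b" "N > 0" "b > 0" "eps > 0"
  shows "gam a b N e \<ge> b" "gam a b N e \<le> b * (1+eps) / eps"
proof -
  have S: "sig a e \<ge> (1+eps)*b*N" using assms(1,2) by (simp add: pos_le_divide_eq)
  have pos: "sig a e - b*N \<ge> eps*b*N" using S by (simp add: algebra_simps)
  have pos2: "eps*b*N > 0" using assms by simp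
  have Sp: "sig a e > 0" using pos pos2 assms by (smt (verit) mult_pos_pos)
  show "gam a b N e \<ge> b" unfolding gam_def
  proof -
    have d: "sig a e - b*N > 0" using pos pos2 by linarith
    have "b*N > 0" using assms by simp
    with d show "b \<le> b * sig a e / (sig a e - b * N)"
      using assms(3) by (simp add: le_divide_eq mult_left_mono)
  qed
  show "gam a b N e \<le> b * (1+eps) / eps" unfolding gam_def
  proof -
    have d: "sig a e - b*N > 0" using pos pos2 by linarith
    have "b * sig a e * eps \<le> b * (1+eps) * (sig a e - b*N)"
    proof -
      have "sig a e * eps \<le> (1+eps) * (sig a e - b*N)" using S by (simp add: algebra_simps)
      then show ?thesis using assms(3) by (smt (verit) mult.assoc mult_left_mono)
    qed
    then show "b * sig a e / (sig a e - b * N) \<le> b * (1 + eps) / eps"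
      using d assms(4) by (simp add: divide_simps)
  qed
qed

lemma bucket_ratio:
  assumes "f \<in> bucket a Ls i" "g \<in> bucket a Ls i"
  shows "sig a g \<le> 2 * sig a f"
  using assms unfolding bucket_def by auto

lemma feas_sum:
  assumes "sinr_feasible a b N L" "f \<in> L" "N > 0" "b > 0" "\<forall>g\<in>L. sigx a g f \<ge> 0"
  shows "(\<Sum>g\<in>L-{f}. sigx a g f) \<le> sig a f / b"
proof -
  let ?s = "\<Sum>g\<in>L-{f}. sigx a g f"
  have s0: "?s \<ge> 0" using assms(5) by (intro sum_nonneg) auto
  have "sig a f / (N + ?s) \<ge> b" using assms(1,2) unfolding sinr_feasible_def by auto
  then have "sig a f \<ge> b * (N + ?s)" using s0 assms(3) by (simp add: le_divide_eq)
  then have "b * ?s \<le> sig a f" using assms(3,4) s0 by (smt (verit) mult_pos_pos distrib_left)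
  then show ?thesis using assms(4) by (simp add: le_divide_eq mult.commute)
qed

lemma far_lemma2:
  fixes a d1 d2 P :: real
  assumes "a \<ge> 0" "d1 > 0" "d2 > 0" "d2 \<le> 3 * d1" "P > 0"
  shows "P / d1 powr a \<le> 3 powr a * (P / d2 powr a)"
proof -
  have "d2 powr a \<le> (3*d1) powr a" using assms by (intro powr_mono2) auto
  also have "\<dots> = 3 powr a * d1 powr a" by (simp add: powr_mult)
  finally have h: "d2 powr a \<le> 3 powr a * d1 powr a" .
  have p1: "d1 powr a > 0" "d2 powr a > 0" "3 powr a > (0::real)" using assms by auto
  show ?thesis using h p1 assms(5)
    by (simp add: divide_simps mult_left_mono mult.commute mult.left_commute)
qed


theorem theorem1:
  fixes \<alpha> \<beta> \<epsilon> :: real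
  assumes "\<alpha> \<ge> 0" and "\<beta> > 0" and "\<epsilon> > 0"
  shows "\<exists>C::real. \<forall>(N::real) (Ls::link set) (i::nat) (L::link set) (e::link).
     N > 0 \<and> finite Ls \<and> (\<forall>f\<in>Ls. power f > 0)
     \<and> (\<forall>f\<in>Ls. \<forall>f'\<in>Ls. sender f' \<noteq> receiver f)
     \<and> (\<forall>f\<in>Ls. sig \<alpha> f / N \<ge> (1 + \<epsilon>) * \<beta>)
     \<and> L \<subseteq> bucket \<alpha> Ls i \<and> sinr_feasible \<alpha> \<beta> N L \<and> e \<in> bucket \<alpha> Ls i
     \<longrightarrow> (\<Sum>e'\<in>{e'\<in>L. dlen e' \<ge> dlen e}. aff_bar \<alpha> \<beta> N e' e)
           \<le> aff_bar_set \<alpha> \<beta> N L e + aff_bar \<alpha> \<beta> N e e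
       \<and> aff_bar_set \<alpha> \<beta> N L e + aff_bar \<alpha> \<beta> N e e \<le> C"
proof -
  define K where "K = 3 powr \<alpha>"
  have Kpos: "K > 0" unfolding K_def by simp
  define C where "C = 3 + 2 * K / \<beta> + 2 * K * (1 + \<epsilon>) / \<epsilon>"
  show ?thesis
  proof (rule exI[of _ C], intro allI impI, elim conjE)
    fix N Ls i L e
    assume N: "N > 0" and fin: "finite Ls" and pw: "\<forall>f\<in>Ls. power f > 0"
      and sr: "\<forall>f\<in>Ls. \<forall>f'\<in>Ls. sender f' \<noteq> receiver f"
      and sN: "\<forall>f\<in>Ls. sig \<alpha> f / N \<ge> (1 + \<epsilon>) * \<beta>"
      and LB: "L \<subseteq> bucket \<alpha> Ls i" and feas: "sinr_feasible \<alpha> \<beta> N L"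
      and eB: "e \<in> bucket \<alpha> Ls i"
    have BLs: "bucket \<alpha> Ls i \<subseteq> Ls" unfolding bucket_def by auto
    have LLs: "L \<subseteq> Ls" using LB BLs by auto
    have eLs: "e \<in> Ls" using eB BLs by auto
    have finL: "finite L" using LLs fin finite_subset by auto
    have sigp: "\<And>f. f \<in> Ls \<Longrightarrow> sig \<alpha> f > 0" using pw sr sig_pos by blast
    have sigxn: "\<And>f g. f \<in> Ls \<Longrightarrow> sigx \<alpha> f g \<ge> 0" using pw sigx_nonneg by blast
    have gb: "\<And>f. f \<in> Ls \<Longrightarrow> gam \<alpha> \<beta> N f \<ge> \<beta> \<and> gam \<alpha> \<beta> N f \<le> \<beta> * (1+\<epsilon>) / \<epsilon>"
      using gam_bounds sN N assms by blast
    have affn: "\<And>f. f \<in> Ls \<Longrightarrow> aff \<alpha> \<beta> N f e \<ge> 0"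
    proof -
      fix f assume f: "f \<in> Ls"
      have "gam \<alpha> \<beta> N e \<ge> 0" using gb[OF eLs] assms by linarith
      moreover have "aff_hat \<alpha> e' e \<ge> 0" if "e' \<in> Ls" for e'
        unfolding aff_hat_def using sigxn[OF that] sigp[OF eLs] by simp
      ultimately show "aff \<alpha> \<beta> N f e \<ge> 0" unfolding aff_def using f by simp
    qed
    have abn: "\<And>f. f \<in> Ls \<Longrightarrow> aff_bar \<alpha> \<beta> N f e \<ge> 0"
      unfolding aff_bar_def using affn by simp
    have ab1: "\<And>f. aff_bar \<alpha> \<beta> N f e \<le> 1" unfolding aff_bar_def by simp
    have abe: "aff_bar \<alpha> \<beta> N e e \<ge> 0" using abn eLs by blast
    show "(\<Sum>e'\<in>{e'\<in>L. dlen e' \<ge> dlen e}. aff_bar \<alpha> \<beta> N e' e)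
           \<le> aff_bar_set \<alpha> \<beta> N L e + aff_bar \<alpha> \<beta> N e e
       \<and> aff_bar_set \<alpha> \<beta> N L e + aff_bar \<alpha> \<beta> N e e \<le> C"
    proof
      have "(\<Sum>e'\<in>{e'\<in>L. dlen e' \<ge> dlen e}. aff_bar \<alpha> \<beta> N e' e)
            \<le> (\<Sum>e'\<in>L. aff_bar \<alpha> \<beta> N e' e)"
        using finL abn LLs by (intro sum_mono2) auto
      also have "\<dots> \<le> aff_bar_set \<alpha> \<beta> N L e + aff_bar \<alpha> \<beta> N e e"
      proof (cases "e \<in> L")
        case True
        then show ?thesis unfolding aff_bar_set_def using finL
          by (simp add: sum.remove)
      next
        case False
        then show ?thesis unfolding aff_bar_set_def using abe by simp
      qed
      finally show "(\<Sum>e'\<in>{e'\<in>L. dlen e' \<ge> dlen e}. aff_bar \<alpha> \<beta> N e' e)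
           \<le> aff_bar_set \<alpha> \<beta> N L e + aff_bar \<alpha> \<beta> N e e" .
    next
      have Cge: "C \<ge> 3" unfolding C_def using Kpos assms by (simp add: add_nonneg_nonneg)
      have main: "aff_bar_set \<alpha> \<beta> N L e \<le> C - 1"
      proof (cases "L = {}")
        case True
        then show ?thesis unfolding aff_bar_set_def using Cge by simp
      next
        case Lne: False
        define x where "x = receiver e"
        define \<rho> where "\<rho> = Min ((\<lambda>f. dist (receiver f) x) ` L)"
        have "\<rho> \<in> (\<lambda>f. dist (receiver f) x) ` L" unfolding \<rho>_def
          using finL Lne by (intro Min_in) auto
        then obtain e2 where e2L: "e2 \<in> L" and e2r: "dist (receiver e2) x = \<rho>" by auto
        have rmin: "\<And>f. f \<in> L \<Longrightarrow> \<rho> \<le> dist (receiver f) x" unfolding \<rho>_def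
          using finL by (intro Min_le) auto
        define Near where "Near = {f \<in> L - {e}. dist (sender f) x < \<rho>/2}"
        define Far where "Far = {f \<in> L - {e}. \<not> dist (sender f) x < \<rho>/2}"
        have NF: "L - {e} = Near \<union> Far" "Near \<inter> Far = {}" unfolding Near_def Far_def by auto
        have finN: "finite Near" "finite Far" using finL unfolding Near_def Far_def by auto
        have split: "aff_bar_set \<alpha> \<beta> N L e = (\<Sum>f\<in>Near. aff_bar \<alpha> \<beta> N f e) + (\<Sum>f\<in>Far. aff_bar \<alpha> \<beta> N f e)"
          unfolding aff_bar_set_def NF(1) using finN NF(2) by (simp add: sum.union_disjoint)
        have nearb: "(\<Sum>f\<in>Near. aff_bar \<alpha> \<beta> N f e) \<le> 1 + 2 * K / \<beta>"
        proof (cases "Near = {}")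
          case True then show ?thesis using Kpos assms by simp
        next
          case Nne: False
          define m where "m = Min (dlen ` Near)"
          have "m \<in> dlen ` Near" unfolding m_def using finN Nne by (intro Min_in) auto
          then obtain e3 where e3N: "e3 \<in> Near" and e3m: "dlen e3 = m" by auto
          have mmin: "\<And>f. f \<in> Near \<Longrightarrow> m \<le> dlen f" unfolding m_def
            using finN by (intro Min_le) auto
          have e3L: "e3 \<in> L" using e3N unfolding Near_def by auto
          have e3Ls: "e3 \<in> Ls" using e3L LLs by auto
          have S3: "sig \<alpha> e3 > 0" using sigp e3Ls by blast
          have lowb: "sig \<alpha> e3 / (2 * K) \<le> sigx \<alpha> f e3" if fN: "f \<in> Near - {e3}" for f
          proof -
            have fL: "f \<in> L" and fLs: "f \<in> Ls" using fN LLs unfolding Near_def by auto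
            have d1: "dist (sender f) x < \<rho>/2" "dist (sender e3) x < \<rho>/2"
              using fN e3N unfolding Near_def by auto
            have r1: "\<rho> \<le> dist (receiver f) x" using rmin fL .
            have dle: "dlen e3 \<le> dlen f" using mmin fN e3m by auto
            have df: "dlen f > \<rho>/2"
            proof -
              have "dist (receiver f) x \<le> dist (sender f) (receiver f) + dist (sender f) x"
                by (metis dist_commute dist_triangle)
              then show ?thesis unfolding dlen_def using d1 r1 by linarith
            qed
            have dc: "dcross f e3 \<le> 3 * dlen f"
            proof -
              have "dist (sender f) (receiver e3) \<le> dist (sender f) x + dist x (sender e3) + dist (sender e3) (receiver e3)"
              proof -
                have "dist (sender f) (receiver e3) \<le> dist (sender f) (sender e3) + dist (sender e3) (receiver e3)"
                  by (rule dist_triangle)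
                moreover have "dist (sender f) (sender e3) \<le> dist (sender f) x + dist x (sender e3)"
                  by (rule dist_triangle)
                ultimately show ?thesis by linarith
              qed
              then show ?thesis unfolding dcross_def dlen_def using d1 dle df
                by (simp add: dlen_def dist_commute)
            qed
            have dcp: "dcross f e3 > 0" unfolding dcross_def using sr fLs e3Ls by auto
            have dfp: "dlen f > 0" unfolding dlen_def using sr fLs by auto
            have "power f / dlen f powr \<alpha> \<le> K * (power f / dcross f e3 powr \<alpha>)"
              unfolding K_def using far_lemma2[OF assms(1) dfp dcp dc] pw fLs by auto
            then have "sig \<alpha> f \<le> K * sigx \<alpha> f e3" unfolding sig_def sigx_def .
            moreover have "sig \<alpha> e3 \<le> 2 * sig \<alpha> f" using bucket_ratio fL e3L LB by blast
            ultimately have "sig \<alpha> e3 \<le> 2 * K * sigx \<alpha> f e3" by linarith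
            then show ?thesis using Kpos by (simp add: divide_simps mult.commute)
          qed
          have "of_nat (card (Near - {e3})) * (sig \<alpha> e3 / (2 * K)) \<le> (\<Sum>f\<in>Near - {e3}. sigx \<alpha> f e3)"
            using lowb sum_bounded_below[of "Near - {e3}" "sig \<alpha> e3 / (2 * K)" "\<lambda>f. sigx \<alpha> f e3"]
            by auto
          also have "\<dots> \<le> (\<Sum>f\<in>L - {e3}. sigx \<alpha> f e3)"
          proof (rule sum_mono2)
            show "finite (L - {e3})" using finL by simp
            show "Near - {e3} \<subseteq> L - {e3}" unfolding Near_def by blast
            show "\<And>b. b \<in> L - {e3} - (Near - {e3}) \<Longrightarrow> 0 \<le> sigx \<alpha> b e3"
              using sigxn LLs by blast
          qed
          also have "\<dots> \<le> sig \<alpha> e3 / \<beta>"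
          proof -
            have "\<forall>g\<in>L. 0 \<le> sigx \<alpha> g e3" using sigxn LLs by blast
            then show ?thesis using feas_sum[OF feas e3L N assms(2)] by blast
          qed
          finally have cb: "of_nat (card (Near - {e3})) * (sig \<alpha> e3 / (2 * K)) \<le> sig \<alpha> e3 / \<beta>" .
          have cb2: "of_nat (card (Near - {e3})) \<le> 2 * K / \<beta>"
          proof -
            from cb have "of_nat (card (Near - {e3})) * sig \<alpha> e3 * \<beta> \<le> sig \<alpha> e3 * (2 * K)"
              using Kpos assms(2) by (simp add: divide_simps mult.commute mult.left_commute)
            then have "of_nat (card (Near - {e3})) * \<beta> \<le> 2 * K"
              using S3 by (simp add: mult.commute mult.left_commute)
            then show ?thesis using assms(2) by (simp add: le_divide_eq)
          qed
          have "card Near = card (Near - {e3}) + 1" using card.remove[OF finN(1) e3N] by simp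
          then have cN: "real (card Near) \<le> 1 + 2 * K / \<beta>" using cb2 by simp
          have "(\<Sum>f\<in>Near. aff_bar \<alpha> \<beta> N f e) \<le> of_nat (card Near) * 1"
            using ab1 by (intro sum_bounded_above) auto
          then show ?thesis using cN by simp
        qed
        have e2Ls: "e2 \<in> Ls" using e2L LLs by auto
        have Se: "sig \<alpha> e > 0" using sigp eLs by blast
        define G where "G = gam \<alpha> \<beta> N e"
        have G: "G \<ge> 0" "G \<le> \<beta> * (1+\<epsilon>) / \<epsilon>" using gb[OF eLs] assms unfolding G_def by auto
        have farpt: "aff_bar \<alpha> \<beta> N f e \<le> G * K / sig \<alpha> e * sigx \<alpha> f e2" if fF: "f \<in> Far - {e2}" for f
        proof -
          have fL: "f \<in> L" and fLs: "f \<in> Ls" using fF LLs unfolding Far_def by auto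
          have d1: "dist (sender f) x \<ge> \<rho>/2" using fF unfolding Far_def by auto
          have dcp: "dcross f e > 0" unfolding dcross_def using sr fLs eLs by auto
          have dcp2: "dcross f e2 > 0" unfolding dcross_def using sr fLs e2Ls by auto
          have dc: "dcross f e2 \<le> 3 * dcross f e"
          proof -
            have "dist (sender f) (receiver e2) \<le> dist (sender f) x + dist (receiver e2) x"
              by (metis dist_commute dist_triangle)
            then show ?thesis unfolding dcross_def x_def using d1 e2r
              by (simp add: x_def)
          qed
          have "power f / dcross f e powr \<alpha> \<le> K * (power f / dcross f e2 powr \<alpha>)"
            unfolding K_def using far_lemma2[OF assms(1) dcp dcp2 dc] pw fLs by auto
          then have sx: "sigx \<alpha> f e \<le> K * sigx \<alpha> f e2" unfolding sigx_def .
          have "aff_bar \<alpha> \<beta> N f e \<le> aff \<alpha> \<beta> N f e" unfolding aff_bar_def by simp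
          also have "\<dots> = G / sig \<alpha> e * sigx \<alpha> f e"
            unfolding aff_def aff_hat_def G_def by simp
          also have "\<dots> \<le> G / sig \<alpha> e * (K * sigx \<alpha> f e2)"
            using sx G Se by (intro mult_left_mono) auto
          finally show ?thesis by simp
        qed
        have "(\<Sum>f\<in>Far. aff_bar \<alpha> \<beta> N f e) = (\<Sum>f\<in>Far \<inter> {e2}. aff_bar \<alpha> \<beta> N f e) + (\<Sum>f\<in>Far - {e2}. aff_bar \<alpha> \<beta> N f e)"
          using finN by (simp add: sum.Int_Diff)
        also have "(\<Sum>f\<in>Far \<inter> {e2}. aff_bar \<alpha> \<beta> N f e) \<le> 1"
        proof -
          have "(\<Sum>f\<in>Far \<inter> {e2}. aff_bar \<alpha> \<beta> N f e) \<le> of_nat (card (Far \<inter> {e2})) * 1"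
            using ab1 by (intro sum_bounded_above) auto
          moreover have "card (Far \<inter> {e2}) \<le> 1"
            using card_mono[of "{e2}" "Far \<inter> {e2}"] by auto
          ultimately show ?thesis by simp
        qed
        also have "(\<Sum>f\<in>Far - {e2}. aff_bar \<alpha> \<beta> N f e) \<le> (\<Sum>f\<in>Far - {e2}. G * K / sig \<alpha> e * sigx \<alpha> f e2)"
          using farpt by (intro sum_mono) auto
        also have "\<dots> \<le> (\<Sum>f\<in>L - {e2}. G * K / sig \<alpha> e * sigx \<alpha> f e2)"
        proof (rule sum_mono2)
          show "finite (L - {e2})" using finL by simp
          show "Far - {e2} \<subseteq> L - {e2}" unfolding Far_def by blast
          show "\<And>b. b \<in> L - {e2} - (Far - {e2}) \<Longrightarrow> 0 \<le> G * K / sig \<alpha> e * sigx \<alpha> b e2"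
            using sigxn LLs G Kpos Se by (meson divide_nonneg_pos mult_nonneg_nonneg less_imp_le subsetD DiffD1)
        qed
        also have "\<dots> = G * K / sig \<alpha> e * (\<Sum>f\<in>L - {e2}. sigx \<alpha> f e2)"
          by (simp add: sum_distrib_left)
        also have "\<dots> \<le> G * K / sig \<alpha> e * (sig \<alpha> e2 / \<beta>)"
        proof (rule mult_left_mono)
          have "\<forall>g\<in>L. 0 \<le> sigx \<alpha> g e2" using sigxn LLs by blast
          then show "(\<Sum>f\<in>L - {e2}. sigx \<alpha> f e2) \<le> sig \<alpha> e2 / \<beta>"
            using feas_sum[OF feas e2L N assms(2)] by blast
          show "0 \<le> G * K / sig \<alpha> e" using G Kpos Se by simp
        qed
        also have "\<dots> \<le> G * K / sig \<alpha> e * (2 * sig \<alpha> e / \<beta>)"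
        proof -
          have "sig \<alpha> e2 \<le> 2 * sig \<alpha> e" using bucket_ratio[OF eB] e2L LB by blast
          then show ?thesis using G Kpos Se assms(2)
            by (intro mult_left_mono divide_right_mono) auto
        qed
        also have "\<dots> = 2 * G * K / \<beta>" using Se by (simp add: field_simps)
        also have "\<dots> \<le> 2 * (\<beta> * (1+\<epsilon>) / \<epsilon>) * K / \<beta>"
          using G Kpos assms by (intro divide_right_mono mult_right_mono mult_left_mono) auto
        also have "\<dots> = 2 * K * (1 + \<epsilon>) / \<epsilon>" using assms by (simp add: field_simps)
        finally have farb: "(\<Sum>f\<in>Far. aff_bar \<alpha> \<beta> N f e) \<le> 1 + 2 * K * (1 + \<epsilon>) / \<epsilon>" by linarith
        show ?thesis using split nearb farb unfolding C_def by linarith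
      qed
      show "aff_bar_set \<alpha> \<beta> N L e + aff_bar \<alpha> \<beta> N e e \<le> C" using main ab1[of e] by linarith
    qed
  qed
qed

end
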